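(* We have $$\lim_{n\to\infty}\frac{\varphi_n}{h_n}=\frac45,\qquad \lim_{n\to\infty}\frac{\theta_n}{p_n}=\frac45,\qquad \lim_{n\to\infty}\frac{q_n}{h_n}=\frac15,\qquad \lim_{n\to\infty}\frac{r_n}{p_n}=\frac15.$$
   Context: Let $s=\sqrt3/2$. Consider the standard triangular lattice in the plane whose vertices are the points $(a+b/2,\,bs)$ with $a,b\in\mathbb Z$ and whose edges are the unit segments joining lattice points in the directions $0^\circ,60^\circ,120^\circ$; it divides the plane into unit equilateral triangles called cells. A small tile is a single cell; a large tile is an equilateral triangle of side $2$ whose vertices are lattice points (so it is a union of $4$ cells; it may point up or down). For a region $R$ that is a finite union of cells, a tiling of $R$ is a finite set of small and large tiles, each contained in $R$, with pairwise disjoint interiors and union equal to $R$. For $n\ge1$, the region $H_n$ is the union of the trapezoid with vertices $(0,0),(n,0),(n-\tfrac12,s),(\tfrac12,s)$ and the trapezoid with vertices $(\tfrac12,s),(n-\tfrac12,s),(n,2s),(0,2s)$ ($4n-2$ cells; for $n=1$ two unit triangles meeting at a point), and $P_n$ is $H_n$ with the cell with vertices $(n-1,0),(n,0),(n-\tfrac12,s)$ removed. Define $h_n$ (resp. $p_n$) as the sum, over all tilings of $H_n$ (resp. $P_n$), of the total number of tiles in the tiling; $\varphi_n$ (resp. $\theta_n$) as the same sum counting only small tiles; and $q_n$ (resp. $r_n$) as the same sum counting only large tiles. *)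

theory Defs
  imports Complex_Main
begin

text \<open>Lattice point (a,b) :: int \<times> int stands for the plane point (a + b/2, b*sqrt 3/2).
  A cell is encoded as (True, a, b) for the upward unit triangle with vertices
  (a,b), (a+1,b), (a,b+1), and as (False, a, b) for the downward unit triangle with
  vertices (a+1,b), (a,b+1), (a+1,b+1).  Every cell of the lattice has exactly one
  such code.\<close>

type_synonym cell = "bool \<times> int \<times> int"

text \<open>Large tiles (side 2, lattice vertices), as the sets of the 4 cells they consist of.
  Upward: vertices (a,b),(a+2,b),(a,b+2).  Downward: vertices (a+2,b),(a,b+2),(a+2,b+2).\<close>
definition large_up :: "int \<Rightarrow> int \<Rightarrow> cell set" where
  "large_up a b = {(True,a,b), (True,a+1,b), (True,a,b+1), (False,a,b)}"

definition large_down :: "int \<Rightarrow> int \<Rightarrow> cell set" where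
  "large_down a b = {(False,a+1,b), (False,a,b+1), (False,a+1,b+1), (True,a+1,b+1)}"

definition small_tile :: "cell set \<Rightarrow> bool" where
  "small_tile t \<longleftrightarrow> (\<exists>c. t = {c})"

definition large_tile :: "cell set \<Rightarrow> bool" where
  "large_tile t \<longleftrightarrow> (\<exists>a b. t = large_up a b \<or> t = large_down a b)"

definition is_tile :: "cell set \<Rightarrow> bool" where
  "is_tile t \<longleftrightarrow> small_tile t \<or> large_tile t"

text \<open>A tiling of a region R (finite set of cells): a finite set of tiles, each contained
  in R, pairwise with disjoint interiors (= disjoint cell sets), covering R.\<close>
definition tiling :: "cell set \<Rightarrow> cell set set \<Rightarrow> bool" where
  "tiling R T \<longleftrightarrow> finite T \<and> (\<forall>t\<in>T. is_tile t \<and> t \<subseteq> R)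
     \<and> (\<forall>t\<in>T. \<forall>u\<in>T. t \<noteq> u \<longrightarrow> t \<inter> u = {}) \<and> \<Union>T = R"

definition tilings :: "cell set \<Rightarrow> cell set set set" where
  "tilings R = {T. tiling R T}"

definition H :: "nat \<Rightarrow> cell set" where
  "H n = {(True,a,0) | a. 0 \<le> a \<and> a \<le> int n - 1}
       \<union> {(False,a,0) | a. 0 \<le> a \<and> a \<le> int n - 2}
       \<union> {(False,a,1) | a. -1 \<le> a \<and> a \<le> int n - 2}
       \<union> {(True,a,1) | a. 0 \<le> a \<and> a \<le> int n - 2}"

text \<open>P_n: H_n minus the cell with vertices (n-1,0),(n,0),(n-1/2,s).\<close>
definition P :: "nat \<Rightarrow> cell set" where
  "P n = H n - {(True, int n - 1, 0)}"

definition total_tiles :: "cell set \<Rightarrow> nat" where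
  "total_tiles R = (\<Sum>T\<in>tilings R. card T)"

definition small_tiles :: "cell set \<Rightarrow> nat" where
  "small_tiles R = (\<Sum>T\<in>tilings R. card {t\<in>T. small_tile t})"

definition large_tiles :: "cell set \<Rightarrow> nat" where
  "large_tiles R = (\<Sum>T\<in>tilings R. card {t\<in>T. large_tile t})"

definition h_seq :: "nat \<Rightarrow> nat" where "h_seq n = total_tiles (H n)"
definition p_seq :: "nat \<Rightarrow> nat" where "p_seq n = total_tiles (P n)"
definition phi_seq :: "nat \<Rightarrow> nat" where "phi_seq n = small_tiles (H n)"
definition theta_seq :: "nat \<Rightarrow> nat" where "theta_seq n = small_tiles (P n)"
definition q_seq :: "nat \<Rightarrow> nat" where "q_seq n = large_tiles (H n)"
definition r_seq :: "nat \<Rightarrow> nat" where "r_seq n = large_tiles (P n)"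

end

theory Submission
  imports Defs
begin


definition pd :: "cell set set \<Rightarrow> bool" where
 "pd L \<longleftrightarrow> (\<forall>t\<in>L. \<forall>u\<in>L. t \<noteq> u \<longrightarrow> t \<inter> u = {})"

definition Fm :: "cell set \<Rightarrow> cell set set \<Rightarrow> cell set set" where
 "Fm R L = L \<union> (\<lambda>c. {c}) ` (R - \<Union>L)"

definition LS :: "cell set \<Rightarrow> cell set set set" where
 "LS R = {L. L \<subseteq> {t. large_tile t \<and> t \<subseteq> R} \<and> pd L}"

lemma card_large: "large_tile t \<Longrightarrow> card t = 4"
  by (auto simp: large_tile_def large_up_def large_down_def)

lemma large_not_small: "large_tile t \<Longrightarrow> \<not> small_tile t"
  using card_large by (fastforce simp: small_tile_def)

lemma large_not_single: "large_tile {c} \<Longrightarrow> False"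
  using card_large by fastforce

lemma large_fin: "large_tile t \<Longrightarrow> finite t"
  using card_large by (metis card.infinite zero_neq_numeral)

lemma tiling_Fm: "finite R \<Longrightarrow> L \<in> LS R \<Longrightarrow> tiling R (Fm R L)"
proof -
  assume R: "finite R" and L: "L \<in> LS R"
  have LL: "L \<subseteq> Pow R" using L by (auto simp: LS_def)
  have fL: "finite L" using LL R by (meson finite_Pow_iff finite_subset)
  show ?thesis unfolding tiling_def Fm_def
  proof (intro conjI)
    show "finite (L \<union> (\<lambda>c. {c}) ` (R - \<Union> L))" using fL R by auto
    show "\<forall>t\<in>L \<union> (\<lambda>c. {c}) ` (R - \<Union> L). is_tile t \<and> t \<subseteq> R"
      using L by (auto simp: LS_def is_tile_def small_tile_def)
    show "\<forall>t\<in>L \<union> (\<lambda>c. {c}) ` (R - \<Union> L). \<forall>u\<in>L \<union> (\<lambda>c. {c}) ` (R - \<Union> L). t \<noteq> u \<longrightarrow> t \<inter> u = {}"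
    proof (intro ballI impI)
      fix t u assume tu: "t \<in> L \<union> (\<lambda>c. {c}) ` (R - \<Union> L)" "u \<in> L \<union> (\<lambda>c. {c}) ` (R - \<Union> L)" "t \<noteq> u"
      have pdL: "\<And>t u. t \<in> L \<Longrightarrow> u \<in> L \<Longrightarrow> t \<noteq> u \<Longrightarrow> t \<inter> u = {}" using L by (auto simp: LS_def pd_def)
      show "t \<inter> u = {}"
      proof (cases "t \<in> L")
        case True
        then show ?thesis using tu pdL by (cases "u \<in> L") auto
      next
        case False
        then show ?thesis using tu by (cases "u \<in> L") auto
      qed
    qed
    show "\<Union> (L \<union> (\<lambda>c. {c}) ` (R - \<Union> L)) = R" using LL by auto
  qed
qed

lemma tiling_is_Fm:
  assumes "tiling R T"
  shows "{t\<in>T. large_tile t} \<in> LS R \<and> T = Fm R {t\<in>T. large_tile t}"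
proof -
  have t: "finite T" "\<And>t. t\<in>T \<Longrightarrow> is_tile t \<and> t \<subseteq> R"
    "\<And>t u. t\<in>T \<Longrightarrow> u\<in>T \<Longrightarrow> t \<noteq> u \<Longrightarrow> t \<inter> u = {}" "\<Union>T = R"
    using assms by (auto simp: tiling_def)
  have "{t\<in>T. large_tile t} \<in> LS R" using t by (auto simp: LS_def pd_def)
  moreover have "T \<subseteq> Fm R {t\<in>T. large_tile t}"
  proof
    fix t assume tT: "t \<in> T"
    show "t \<in> Fm R {t\<in>T. large_tile t}"
    proof (cases "large_tile t")
      case True then show ?thesis using tT by (auto simp: Fm_def)
    next
      case False
      then obtain c where c: "t = {c}" using t(2)[OF tT] by (auto simp: is_tile_def small_tile_def)
      have "c \<in> R" using t(2)[OF tT] c by auto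
      moreover have "c \<notin> \<Union>{t\<in>T. large_tile t}"
      proof
        assume "c \<in> \<Union>{t\<in>T. large_tile t}"
        then obtain u where u: "u \<in> T" "large_tile u" "c \<in> u" by auto
        have "u \<noteq> t" using u(2) c large_not_single by metis
        then show False using t(3)[OF u(1) tT] u c by auto
      qed
      ultimately show ?thesis using c by (auto simp: Fm_def)
    qed
  qed
  moreover have "Fm R {t\<in>T. large_tile t} \<subseteq> T"
  proof
    fix t assume "t \<in> Fm R {t\<in>T. large_tile t}"
    then consider "t \<in> T" | c where "t = {c}" "c \<in> R" "c \<notin> \<Union>{t\<in>T. large_tile t}"
      by (auto simp: Fm_def)
    then show "t \<in> T"
    proof cases
      case (2 c)
      then obtain u where u: "u \<in> T" "c \<in> u" using t(4) by auto
      then have "\<not> large_tile u" using 2 by auto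
      then obtain d where "u = {d}" using t(2)[OF u(1)] by (auto simp: is_tile_def small_tile_def)
      then show ?thesis using u 2 by auto
    qed
  qed
  ultimately show ?thesis by blast
qed

lemma large_of_Fm: assumes "L \<in> LS R" shows "{t\<in>Fm R L. large_tile t} = L"
proof -
  have "\<forall>t\<in>L. large_tile t" using assms by (auto simp: LS_def)
  moreover have "\<forall>t\<in>(\<lambda>c. {c}) ` (R - \<Union>L). \<not> large_tile t" using large_not_single by blast
  ultimately show ?thesis unfolding Fm_def by blast
qed

lemma small_of_Fm: assumes "L \<in> LS R" shows "{t\<in>Fm R L. small_tile t} = (\<lambda>c. {c}) ` (R - \<Union>L)"
proof -
  have "\<forall>t\<in>L. \<not> small_tile t" using assms large_not_small by (auto simp: LS_def)
  moreover have "\<forall>t\<in>(\<lambda>c. {c}) ` (R - \<Union>L). small_tile t" by (auto simp: small_tile_def)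
  ultimately show ?thesis unfolding Fm_def by blast
qed

lemma tilings_eq: assumes R: "finite R" shows "tilings R = Fm R ` LS R"
proof
  show "tilings R \<subseteq> Fm R ` LS R"
  proof
    fix T assume "T \<in> tilings R"
    then have "tiling R T" by (simp add: tilings_def)
    from tiling_is_Fm[OF this] have "{t\<in>T. large_tile t} \<in> LS R" "T = Fm R {t\<in>T. large_tile t}" by auto
    then show "T \<in> Fm R ` LS R" by (rule rev_image_eqI)
  qed
  show "Fm R ` LS R \<subseteq> tilings R"
  proof
    fix T assume "T \<in> Fm R ` LS R"
    then obtain L where "L \<in> LS R" "T = Fm R L" by blast
    then show "T \<in> tilings R" using tiling_Fm[OF R] by (simp add: tilings_def)
  qed
qed

lemma inj_Fm: "inj_on (Fm R) (LS R)"
proof (rule inj_onI)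
  fix L L' assume "L \<in> LS R" "L' \<in> LS R" "Fm R L = Fm R L'"
  then show "L = L'" using large_of_Fm by metis
qed

lemma card_Union_L:
  assumes R: "finite R" and L: "L \<in> LS R"
  shows "card (\<Union>L) = 4 * card L" "finite L" "\<Union>L \<subseteq> R"
proof -
  have LL: "L \<subseteq> Pow R" using L by (auto simp: LS_def)
  show fL: "finite L" using LL R by (meson finite_Pow_iff finite_subset)
  have "card (\<Union>L) = sum card L"
  proof (rule card_Union_disjoint)
    show "pairwise disjnt L" using L unfolding LS_def pd_def pairwise_def disjnt_def by blast
    fix A assume "A \<in> L"
    then have "large_tile A" using L by (auto simp: LS_def)
    then show "finite A" by (rule large_fin)
  qed
  also have "\<dots> = sum (\<lambda>_. 4) L"
  proof (rule sum.cong)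
    fix x assume "x \<in> L"
    then have "large_tile x" using L by (auto simp: LS_def)
    then show "card x = 4" by (rule card_large)
  qed simp
  finally show "card (\<Union>L) = 4 * card L" by simp
  show "\<Union>L \<subseteq> R" using LL by auto
qed

lemma card_small_Fm:
  assumes R: "finite R" and L: "L \<in> LS R"
  shows "card {t\<in>Fm R L. small_tile t} + 4 * card L = card R"
proof -
  note c = card_Union_L[OF R L]
  have fU: "finite (\<Union>L)" using finite_subset[OF c(3) R] .
  have "card {t\<in>Fm R L. small_tile t} = card (R - \<Union>L)"
    unfolding small_of_Fm[OF L] by (rule card_image) (auto simp: inj_on_def)
  also have "\<dots> = card R - card (\<Union>L)" by (rule card_Diff_subset[OF fU c(3)])
  finally have "card {t\<in>Fm R L. small_tile t} = card R - card (\<Union>L)" .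
  moreover have "card (\<Union>L) \<le> card R" by (rule card_mono[OF R c(3)])
  ultimately show ?thesis using c(1) by linarith
qed

lemma card_Fm:
  assumes R: "finite R" and L: "L \<in> LS R"
  shows "card (Fm R L) + 3 * card L = card R"
proof -
  have e: "Fm R L = {t\<in>Fm R L. large_tile t} \<union> {t\<in>Fm R L. small_tile t}"
    using tiling_Fm[OF R L] unfolding tiling_def is_tile_def by blast
  have f: "finite (Fm R L)" using tiling_Fm[OF R L] unfolding tiling_def by blast
  have d: "{t\<in>Fm R L. large_tile t} \<inter> {t\<in>Fm R L. small_tile t} = {}" using large_not_small by blast
  have "card (Fm R L) = card {t\<in>Fm R L. large_tile t} + card {t\<in>Fm R L. small_tile t}"
    apply (subst e)
    apply (rule card_Un_disjoint)
    using f d by auto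
  then show ?thesis using card_small_Fm[OF R L] large_of_Fm[OF L] by simp
qed



definition tt :: "bool \<times> int \<Rightarrow> cell set" where
  "tt x = (if fst x then large_up (snd x) 0 else large_down (snd x - 1) 0)"

definition noconf :: "(bool \<times> int) set \<Rightarrow> bool" where
  "noconf I \<longleftrightarrow> (\<forall>b a. (b,a) \<in> I \<longrightarrow> (b,a+1) \<notin> I \<and> (\<not>b,a) \<notin> I)"

definition W :: "(bool \<times> int) set \<Rightarrow> (bool \<times> int) set set" where
  "W K = {I. I \<subseteq> K \<and> noconf I}"

lemma tt_True: "tt (True,a) = large_up a 0" by (simp add: tt_def)
lemma tt_False: "tt (False,a) = large_down (a-1) 0" by (simp add: tt_def)

lemma large_tt: "large_tile (tt x)"
  by (cases x) (auto simp: tt_def large_tile_def)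

lemma tt_inj: "inj tt"
proof (rule injI)
  fix x y assume e: "tt x = tt y"
  obtain b a b' a' where xy: "x = (b,a)" "y = (b',a')" by (cases x, cases y) auto
  show "x = y"
  proof (cases b; cases b')
    assume "b" "b'"
    then have "(False,a,0) \<in> tt x" using xy by (simp add: tt_def large_up_def)
    then have "(False,a,0) \<in> tt y" using e by simp
    then show ?thesis using xy \<open>b\<close> \<open>b'\<close> by (simp add: tt_def large_up_def)
  next
    assume "b" "\<not>b'"
    then have "(True,a,0) \<in> tt x" using xy by (simp add: tt_def large_up_def)
    then have "(True,a,0) \<in> tt y" using e by simp
    then show ?thesis using xy \<open>\<not>b'\<close> by (simp add: tt_def large_down_def)
  next
    assume "\<not>b" "b'"
    then have "(True,a',0) \<in> tt y" using xy by (simp add: tt_def large_up_def)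
    then have "(True,a',0) \<in> tt x" using e by simp
    then show ?thesis using xy \<open>\<not>b\<close> by (simp add: tt_def large_down_def)
  next
    assume "\<not>b" "\<not>b'"
    then have "(True,a,1) \<in> tt x" using xy by (simp add: tt_def large_down_def)
    then have "(True,a,1) \<in> tt y" using e by simp
    then show ?thesis using xy \<open>\<not>b\<close> \<open>\<not>b'\<close> by (simp add: tt_def large_down_def)
  qed
qed

lemma tt_meet: "tt (b,a) \<inter> tt (b',a') \<noteq> {} \<longleftrightarrow> (a = a' \<or> (b = b' \<and> (a' = a + 1 \<or> a = a' + 1)))"
  by (cases b; cases b') (auto simp: tt_def large_up_def large_down_def)

lemma pd_tt: "pd (tt ` I) \<longleftrightarrow> noconf I"
proof
  assume p: "pd (tt ` I)"
  have d: "tt x \<inter> tt y = {}" if xy: "x \<in> I" "y \<in> I" "x \<noteq> y" for x y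
  proof -
    have ne: "tt x \<noteq> tt y" using xy(3) tt_inj by (simp add: inj_eq)
    have "\<forall>t\<in>tt`I. \<forall>u\<in>tt`I. t\<noteq>u \<longrightarrow> t\<inter>u={}" using p by (simp only: pd_def)
    then show "tt x \<inter> tt y = {}" using ne xy(1,2) by (meson imageI)
  qed
  show "noconf I" unfolding noconf_def
  proof (intro allI impI conjI notI)
    fix b a assume "(b,a) \<in> I" "(b,a+1) \<in> I"
    then show False using d[of "(b,a)" "(b,a+1)"] tt_meet[of b a b "a+1"] by auto
  next
    fix b a assume "(b,a) \<in> I" "(\<not>b,a) \<in> I"
    then show False using d[of "(b,a)" "(\<not>b,a)"] tt_meet[of b a "\<not>b" a] by auto
  qed
next
  assume n: "noconf I"
  show "pd (tt ` I)" unfolding pd_def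
  proof (intro ballI impI)
    fix t u assume "t \<in> tt ` I" "u \<in> tt ` I" "t \<noteq> u"
    then obtain b a b' a' where tu: "t = tt (b,a)" "u = tt (b',a')" "(b,a) \<in> I" "(b',a') \<in> I" "(b,a) \<noteq> (b',a')"
      by fastforce
    have "\<not> (a = a' \<or> (b = b' \<and> (a' = a + 1 \<or> a = a' + 1)))"
    proof
      assume "a = a' \<or> (b = b' \<and> (a' = a + 1 \<or> a = a' + 1))"
      moreover have n1: "\<And>b a. (b,a) \<in> I \<Longrightarrow> (b,a+1) \<notin> I" and n2: "\<And>b a. (b,a) \<in> I \<Longrightarrow> (\<not>b,a) \<notin> I"
        using n unfolding noconf_def by blast+
      ultimately show False using tu(3,4,5)
        by (cases b; cases b') (auto dest: n1 n2)
    qed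
    then have "\<not> (tt (b,a) \<inter> tt (b',a') \<noteq> {})" by (simp only: tt_meet not_False_eq_True)
    then show "t \<inter> u = {}" using tu(1,2) by (simp only: not_not)
  qed
qed

lemma memH: "((c::bool),a,b) \<in> H n \<longleftrightarrow> (c \<and> b=0 \<and> 0\<le>a \<and> a \<le> int n - 1) \<or> (\<not>c \<and> b=0 \<and> 0\<le>a \<and> a\<le>int n-2)
   \<or> (\<not>c \<and> b=1 \<and> -1\<le>a \<and> a\<le>int n-2) \<or> (c \<and> b=1 \<and> 0\<le>a \<and> a\<le>int n-2)"
  by (cases c) (auto simp: H_def)

lemma LT_H: "{t. large_tile t \<and> t \<subseteq> H (Suc m)} = tt ` (UNIV \<times> {0..<int m})"
proof
  show "tt ` (UNIV \<times> {0..<int m}) \<subseteq> {t. large_tile t \<and> t \<subseteq> H (Suc m)}"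
  proof
    fix t assume "t \<in> tt ` (UNIV \<times> {0..<int m})"
    then obtain b a where t: "t = tt (b,a)" "0 \<le> a" "a < int m" by auto
    have "t \<subseteq> H (Suc m)"
    proof (cases b)
      case True then show ?thesis using t by (auto simp: tt_def large_up_def memH)
    next
      case False then show ?thesis using t by (auto simp: tt_def large_down_def memH)
    qed
    then show "t \<in> {t. large_tile t \<and> t \<subseteq> H (Suc m)}" using t large_tt by auto
  qed
  show "{t. large_tile t \<and> t \<subseteq> H (Suc m)} \<subseteq> tt ` (UNIV \<times> {0..<int m})"
  proof
    fix t assume "t \<in> {t. large_tile t \<and> t \<subseteq> H (Suc m)}"
    then have lt: "large_tile t" and sub: "t \<subseteq> H (Suc m)" by auto
    from lt obtain a b where "t = large_up a b \<or> t = large_down a b" by (auto simp: large_tile_def)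
    then show "t \<in> tt ` (UNIV \<times> {0..<int m})"
    proof
      assume t: "t = large_up a b"
      have "(True,a,b) \<in> H (Suc m)" "(True,a+1,b) \<in> H (Suc m)" "(True,a,b+1) \<in> H (Suc m)"
        using sub t by (auto simp: large_up_def)
      then have "b = 0" "0 \<le> a" "a < int m" by (auto simp: memH)
      then have "t = tt (True,a)" "(True,a) \<in> UNIV \<times> {0..<int m}" using t by (auto simp: tt_def)
      then show ?thesis by (rule image_eqI)
    next
      assume t: "t = large_down a b"
      have "(False,a+1,b) \<in> H (Suc m)" "(False,a,b+1) \<in> H (Suc m)" "(True,a+1,b+1) \<in> H (Suc m)"
        using sub t by (auto simp: large_down_def)
      then have "b = 0" "0 \<le> a+1" "a+1 < int m" by (auto simp: memH)
      then have "t = tt (False,a+1)" "(False,a+1) \<in> UNIV \<times> {0..<int m}" using t by (auto simp: tt_def)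
      then show ?thesis by (rule image_eqI)
    qed
  qed
qed

lemma LT_P: "{t. large_tile t \<and> t \<subseteq> P (Suc m)} = tt ` (UNIV \<times> {0..<int m} - {(True, int m - 1)})"
proof -
  have "{t. large_tile t \<and> t \<subseteq> P (Suc m)} = {t \<in> {t. large_tile t \<and> t \<subseteq> H (Suc m)}. (True, int m, 0) \<notin> t}"
    by (auto simp: P_def)
  also have "\<dots> = {t \<in> tt ` (UNIV \<times> {0..<int m}). (True, int m, 0) \<notin> t}" by (simp only: LT_H)
  also have "\<dots> = tt ` (UNIV \<times> {0..<int m} - {(True, int m - 1)})"
  proof (intro equalityI subsetI)
    fix t assume "t \<in> {t \<in> tt ` (UNIV \<times> {0..<int m}). (True, int m, 0) \<notin> t}"
    then obtain b a where t: "t = tt (b,a)" "0 \<le> a" "a < int m" "(True, int m, 0) \<notin> t" by auto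
    then have "(b,a) \<noteq> (True, int m - 1)" by (auto simp: tt_def large_up_def)
    then show "t \<in> tt ` (UNIV \<times> {0..<int m} - {(True, int m - 1)})" using t by auto
  next
    fix t assume "t \<in> tt ` (UNIV \<times> {0..<int m} - {(True, int m - 1)})"
    then obtain x where x: "t = tt x" "x \<in> UNIV \<times> {0..<int m} - {(True, int m - 1)}" by (rule imageE)
    obtain b a where "x = (b,a)" by (cases x)
    then have t: "t = tt (b,a)" "0 \<le> a" "a < int m" "(b,a) \<noteq> (True, int m - 1)" using x by auto
    then have "(True, int m, 0) \<notin> t" by (cases b) (auto simp: tt_def large_up_def large_down_def)
    then show "t \<in> {t \<in> tt ` (UNIV \<times> {0..<int m}). (True, int m, 0) \<notin> t}" using t by auto
  qed
  finally show ?thesis .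
qed

lemma H_eq: "H (Suc m) = (\<lambda>a. (True,a,0)) ` {0..int m} \<union> (\<lambda>a. (False,a,0)) ` {0..<int m}
   \<union> ((\<lambda>a. (False,a,1)) ` {-1..<int m} \<union> (\<lambda>a. (True,a,1)) ` {0..<int m})"
  by (auto simp: H_def)

lemma card_H: "card (H (Suc m)) = 4*m+2"
proof -
  have c1: "card ((\<lambda>a. (True,a,0::int)) ` {0..int m}) = m+1" by (subst card_image) (auto simp: inj_on_def)
  have c2: "card ((\<lambda>a. (False,a,0::int)) ` {0..<int m}) = m" by (subst card_image) (auto simp: inj_on_def)
  have c3: "card ((\<lambda>a. (False,a,1::int)) ` {-1..<int m}) = m+1" by (subst card_image) (auto simp: inj_on_def)
  have c4: "card ((\<lambda>a. (True,a,1::int)) ` {0..<int m}) = m" by (subst card_image) (auto simp: inj_on_def)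
  have "card ((\<lambda>a. (True,a,0::int)) ` {0..int m} \<union> (\<lambda>a. (False,a,0::int)) ` {0..<int m}) = 2*m+1"
    by (subst card_Un_disjoint) (auto simp: c1 c2)
  moreover have "card ((\<lambda>a. (False,a,1::int)) ` {-1..<int m} \<union> (\<lambda>a. (True,a,1::int)) ` {0..<int m}) = 2*m+1"
    by (subst card_Un_disjoint) (auto simp: c3 c4)
  ultimately show ?thesis unfolding H_eq by (subst card_Un_disjoint) auto
qed

lemma finite_H: "finite (H (Suc m))" unfolding H_eq by auto

lemma card_P: "card (P (Suc m)) = 4*m+1"
proof -
  have "(True, int (Suc m) - 1, 0) \<in> H (Suc m)" by (auto simp: memH)
  then show ?thesis using card_H finite_H unfolding P_def by (simp add: card_Diff_singleton)
qed

lemma finite_P: "finite (P (Suc m))" using finite_H unfolding P_def by auto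



lemma LS_eq: assumes LT: "{t. large_tile t \<and> t \<subseteq> R} = tt ` K" shows "LS R = image tt ` W K"
proof (intro equalityI subsetI)
  fix L assume "L \<in> LS R"
  then have L: "L \<subseteq> tt ` K" "pd L" using LT by (auto simp: LS_def)
  from L(1) obtain I where I: "I \<subseteq> K" "L = tt ` I" by (auto simp: subset_image_iff)
  then have "noconf I" using L(2) pd_tt by simp
  then show "L \<in> image tt ` W K" using I by (auto simp: W_def)
next
  fix L assume "L \<in> image tt ` W K"
  then obtain I where I: "I \<subseteq> K" "noconf I" "L = tt ` I" by (auto simp: W_def)
  have "tt ` I \<subseteq> tt ` K" using I(1) by (rule image_mono)
  then have "L \<subseteq> {t. large_tile t \<and> t \<subseteq> R}" using I(3) LT by simp
  moreover have "pd L" using I(2,3) pd_tt by simp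
  ultimately show "L \<in> LS R" by (simp add: LS_def)
qed

lemma inj_img_tt: "inj_on (image tt) X"
  by (rule inj_onI) (simp add: inj_image_eq_iff[OF tt_inj])

lemma sum_tilings:
  assumes R: "finite R" and LT: "{t. large_tile t \<and> t \<subseteq> R} = tt ` K"
  shows "sum g (tilings R) = (\<Sum>I\<in>W K. g (Fm R (tt ` I)))"
proof -
  have "sum g (tilings R) = sum (g \<circ> Fm R) (LS R)"
    unfolding tilings_eq[OF R] by (rule sum.reindex[OF inj_Fm])
  also have "\<dots> = sum ((g \<circ> Fm R) \<circ> image tt) (W K)"
    unfolding LS_eq[OF LT] by (rule sum.reindex[OF inj_img_tt])
  finally show ?thesis by simp
qed

lemma sums:
  assumes R: "finite R" and LT: "{t. large_tile t \<and> t \<subseteq> R} = tt ` K"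
  shows "real (total_tiles R) = (\<Sum>I\<in>W K. real (card R) - 3 * real (card I))"
    and "real (small_tiles R) = (\<Sum>I\<in>W K. real (card R) - 4 * real (card I))"
    and "real (large_tiles R) = (\<Sum>I\<in>W K. real (card I))"
proof -
  have mem: "tt ` I \<in> LS R" if "I \<in> W K" for I
    using that LS_eq[OF LT] by auto
  have ci: "card (tt ` I) = card I" for I
    by (rule card_image) (meson inj_on_subset subset_UNIV tt_inj)
  show "real (total_tiles R) = (\<Sum>I\<in>W K. real (card R) - 3 * real (card I))"
    unfolding total_tiles_def sum_tilings[OF R LT] of_nat_sum
  proof (rule sum.cong)
    fix I assume "I \<in> W K"
    from card_Fm[OF R mem[OF this]] show "real (card (Fm R (tt ` I))) = real (card R) - 3 * real (card I)"
      unfolding ci by linarith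
  qed simp
  show "real (small_tiles R) = (\<Sum>I\<in>W K. real (card R) - 4 * real (card I))"
    unfolding small_tiles_def sum_tilings[OF R LT] of_nat_sum
  proof (rule sum.cong)
    fix I assume "I \<in> W K"
    from card_small_Fm[OF R mem[OF this]] show "real (card {t \<in> Fm R (tt ` I). small_tile t}) = real (card R) - 4 * real (card I)"
      unfolding ci by linarith
  qed simp
  show "real (large_tiles R) = (\<Sum>I\<in>W K. real (card I))"
    unfolding large_tiles_def sum_tilings[OF R LT] of_nat_sum
  proof (rule sum.cong)
    fix I assume "I \<in> W K"
    show "real (card {t \<in> Fm R (tt ` I). large_tile t}) = real (card I)"
      using large_of_Fm[OF mem[OF \<open>I \<in> W K\<close>]] ci by simp
  qed simp
qed

definition V :: "nat \<Rightarrow> (bool \<times> int) set set" where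
  "V m = W (UNIV \<times> {0..<int m})"
definition VN where "VN m = {I\<in>V m. (True, int m - 1) \<notin> I \<and> (False, int m - 1) \<notin> I}"
definition VU where "VU m = {I\<in>V m. (True, int m - 1) \<in> I}"
definition VD where "VD m = {I\<in>V m. (False, int m - 1) \<in> I}"

lemma finK: "finite (UNIV \<times> {0..<int m} :: (bool \<times> int) set)"
  by (intro finite_cartesian_product finite_UNIV finite_atLeastLessThan_int)

lemma finV: "finite (V m)"
proof -
  have "V m \<subseteq> Pow (UNIV \<times> {0..<int m})" by (auto simp: V_def W_def)
  moreover have "finite (Pow (UNIV \<times> {0..<int m} :: (bool \<times> int) set))" using finK by simp
  ultimately show ?thesis by (rule finite_subset)
qed

lemma finI: "I \<in> V m \<Longrightarrow> finite I"
proof -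
  assume "I \<in> V m"
  then have "I \<subseteq> UNIV \<times> {0..<int m}" by (auto simp: V_def W_def)
  then show ?thesis using finK by (rule finite_subset)
qed

lemma noconfD: "noconf I \<Longrightarrow> (b,a) \<in> I \<Longrightarrow> (b,a+1) \<notin> I"
  "noconf I \<Longrightarrow> (b,a) \<in> I \<Longrightarrow> (\<not>b,a) \<notin> I"
  unfolding noconf_def by blast+

lemma noconf_sub: "noconf I \<Longrightarrow> J \<subseteq> I \<Longrightarrow> noconf J"
  unfolding noconf_def by blast

lemma V_split: "V m = VN m \<union> VU m \<union> VD m" "VN m \<inter> VU m = {}" "VN m \<inter> VD m = {}" "VU m \<inter> VD m = {}"
proof -
  show "V m = VN m \<union> VU m \<union> VD m" by (auto simp: VN_def VU_def VD_def)
  show "VN m \<inter> VU m = {}" "VN m \<inter> VD m = {}" by (auto simp: VN_def VU_def VD_def)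
  show "VU m \<inter> VD m = {}"
  proof (rule ccontr)
    assume "VU m \<inter> VD m \<noteq> {}"
    then obtain I where "I \<in> V m" "(True, int m - 1) \<in> I" "(False, int m - 1) \<in> I"
      by (auto simp: VU_def VD_def)
    then show False using noconfD(2)[of I True "int m - 1"] by (auto simp: V_def W_def)
  qed
qed

lemma V0: "V 0 = {{}}" by (auto simp: V_def W_def noconf_def)
lemma VN0: "VN 0 = {{}}" by (auto simp: VN_def V0)
lemma VU0: "VU 0 = {}" by (auto simp: VU_def V0)
lemma VD0: "VD 0 = {}" by (auto simp: VD_def V0)

lemma VN_Suc: "VN (Suc m) = V m"
proof (intro equalityI subsetI)
  fix I assume "I \<in> VN (Suc m)"
  then have I: "I \<subseteq> UNIV \<times> {0..<int m + 1}" "noconf I" "(True, int m) \<notin> I" "(False, int m) \<notin> I"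
    by (auto simp: VN_def V_def W_def)
  have "I \<subseteq> UNIV \<times> {0..<int m}"
  proof
    fix x assume xI: "x \<in> I"
    obtain b a where x: "x = (b,a)" by (cases x)
    have r: "0 \<le> a" "a < int m + 1" using I(1) xI x by auto
    have "a \<noteq> int m" using xI x I(3,4) by (cases b) auto
    then show "x \<in> UNIV \<times> {0..<int m}" using r x by auto
  qed
  then show "I \<in> V m" using I(2) by (simp add: V_def W_def)
next
  fix I assume "I \<in> V m"
  then have I: "I \<subseteq> UNIV \<times> {0..<int m}" "noconf I" by (auto simp: V_def W_def)
  then show "I \<in> VN (Suc m)" by (auto simp: VN_def V_def W_def)
qed

lemma VUD_Suc:
  fixes c :: bool
  shows "{I\<in>V (Suc m). (c, int m) \<in> I} = insert (c, int m) ` {I \<in> V m. (c, int m - 1) \<notin> I}"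
proof (intro equalityI subsetI)
  fix I assume "I \<in> {I\<in>V (Suc m). (c, int m) \<in> I}"
  then have I: "I \<subseteq> UNIV \<times> {0..<int m + 1}" "noconf I" "(c, int m) \<in> I"
    by (auto simp: V_def W_def)
  define J where "J = I - {(c, int m)}"
  have nc: "(\<not>c, int m) \<notin> I" using noconfD(2)[OF I(2) I(3)] .
  have "J \<subseteq> UNIV \<times> {0..<int m}"
  proof
    fix x assume xJ: "x \<in> J"
    obtain b a where x: "x = (b,a)" by (cases x)
    have xI: "(b,a) \<in> I" "(b,a) \<noteq> (c, int m)" using xJ x unfolding J_def by auto
    have r: "0 \<le> a" "a < int m + 1" using I(1) xI by auto
    have "a \<noteq> int m"
    proof
      assume "a = int m"
      then show False using xI nc by (cases b; cases c) auto
    qed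
    then show "x \<in> UNIV \<times> {0..<int m}" using r x by auto
  qed
  moreover have "noconf J" using noconf_sub[OF I(2)] J_def by blast
  moreover have "(c, int m - 1) \<notin> J"
  proof
    assume "(c, int m - 1) \<in> J"
    then have "(c, int m - 1) \<in> I" by (simp add: J_def)
    from noconfD(1)[OF I(2) this] I(3) show False by simp
  qed
  ultimately have "J \<in> {I \<in> V m. (c, int m - 1) \<notin> I}" by (simp add: V_def W_def)
  moreover have "I = insert (c, int m) J" using I(3) J_def by blast
  ultimately show "I \<in> insert (c, int m) ` {I \<in> V m. (c, int m - 1) \<notin> I}" by blast
next
  fix I assume "I \<in> insert (c, int m) ` {I \<in> V m. (c, int m - 1) \<notin> I}"
  then obtain J where J: "J \<subseteq> UNIV \<times> {0..<int m}" "noconf J" "(c, int m - 1) \<notin> J" "I = insert (c, int m) J"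
    by (auto simp: V_def W_def)
  have sub: "I \<subseteq> UNIV \<times> {0..<int (Suc m)}" using J(1,4) by auto
  have "noconf I" unfolding noconf_def
  proof (intro allI impI conjI)
    fix b a assume ba: "(b,a) \<in> I"
    show "(b, a+1) \<notin> I"
    proof
      assume h: "(b, a+1) \<in> I"
      show False
      proof (cases "(b,a) = (c, int m)")
        case True
        then have "(b, a+1) \<in> J" using h J(4) by auto
        then show False using J(1) True by auto
      next
        case False
        then have baJ: "(b,a) \<in> J" using ba J(4) by auto
        show False
        proof (cases "(b, a+1) = (c, int m)")
          case True then have "b = c" "a = int m - 1" by auto
          then show False using baJ J(3) by simp
        next
          case False then have "(b,a+1) \<in> J" using h J(4) by auto
          then show False using noconfD(1)[OF J(2) baJ] by simp
        qed
      qed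
    qed
    show "(\<not>b, a) \<notin> I"
    proof
      assume h: "(\<not>b, a) \<in> I"
      show False
      proof (cases "(b,a) = (c, int m)")
        case True
        then have "(\<not>b, a) \<in> J" using h J(4) by auto
        then show False using J(1) True by auto
      next
        case False
        then have baJ: "(b,a) \<in> J" using ba J(4) by auto
        show False
        proof (cases "(\<not>b, a) = (c, int m)")
          case True then show False using baJ J(1) by auto
        next
          case False then have "(\<not>b,a) \<in> J" using h J(4) by auto
          then show False using noconfD(2)[OF J(2) baJ] by simp
        qed
      qed
    qed
  qed
  then show "I \<in> {I\<in>V (Suc m). (c, int m) \<in> I}" using sub J(4) by (simp add: V_def W_def)
qed

lemma VU_Suc: "VU (Suc m) = insert (True, int m) ` (VN m \<union> VD m)"
proof -
  have "VN m \<union> VD m = {I \<in> V m. (True, int m - 1) \<notin> I}"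
    using V_split[of m] by (auto simp: VN_def VU_def VD_def)
  then show ?thesis using VUD_Suc[of m True] by (simp add: VU_def)
qed

lemma VD_Suc: "VD (Suc m) = insert (False, int m) ` (VN m \<union> VU m)"
proof -
  have "VN m \<union> VU m = {I \<in> V m. (False, int m - 1) \<notin> I}"
    using V_split[of m] by (auto simp: VN_def VU_def VD_def)
  then show ?thesis using VUD_Suc[of m False] by (simp add: VD_def)
qed

definition sS :: "(bool \<times> int) set set \<Rightarrow> nat" where "sS X = (\<Sum>I\<in>X. card I)"

lemma card_ins_img:
  assumes "\<forall>I\<in>X. x \<notin> I"
  shows "card (insert x ` X) = card X"
proof (rule card_image, rule inj_onI)
  fix A B assume "A \<in> X" "B \<in> X" "insert x A = insert x B"
  then show "A = B" using assms by (metis Diff_insert_absorb)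
qed

lemma sS_ins_img:
  assumes "\<forall>I\<in>X. x \<notin> I \<and> finite I" "finite X"
  shows "sS (insert x ` X) = sS X + card X"
proof -
  have inj: "inj_on (insert x) X"
  proof (rule inj_onI)
    fix A B assume "A \<in> X" "B \<in> X" "insert x A = insert x B"
    then show "A = B" using assms by (metis Diff_insert_absorb)
  qed
  have "sS (insert x ` X) = (\<Sum>I\<in>X. card (insert x I))"
    unfolding sS_def by (simp add: sum.reindex[OF inj])
  also have "\<dots> = (\<Sum>I\<in>X. card I + 1)" using assms by (intro sum.cong) auto
  also have "\<dots> = sS X + card X" unfolding sS_def by (subst sum.distrib) simp
  finally show ?thesis .
qed

lemma notin_V: "I \<in> V m \<Longrightarrow> (b, int m) \<notin> I"
  by (auto simp: V_def W_def)

lemma fin_parts: "finite (VN m)" "finite (VU m)" "finite (VD m)"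
  using finV[of m] by (auto simp: VN_def VU_def VD_def)

lemma recs:
  "card (VN (Suc m)) = card (VN m) + card (VU m) + card (VD m)"
  "sS (VN (Suc m)) = sS (VN m) + sS (VU m) + sS (VD m)"
  "card (VU (Suc m)) = card (VN m) + card (VD m)"
  "sS (VU (Suc m)) = sS (VN m) + sS (VD m) + card (VN m) + card (VD m)"
  "card (VD (Suc m)) = card (VN m) + card (VU m)"
  "sS (VD (Suc m)) = sS (VN m) + sS (VU m) + card (VN m) + card (VU m)"
proof -
  note f = fin_parts[of m]
  note sp = V_split[of m]
  have cV: "card (V m) = card (VN m) + card (VU m) + card (VD m)"
    unfolding sp(1) using f sp(2-4) by (simp add: card_Un_disjoint Int_Un_distrib2)
  have sV: "sS (V m) = sS (VN m) + sS (VU m) + sS (VD m)"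
    unfolding sp(1) sS_def using f sp(2-4) by (simp add: sum.union_disjoint Int_Un_distrib2)
  show "card (VN (Suc m)) = card (VN m) + card (VU m) + card (VD m)" using cV by (simp add: VN_Suc)
  show "sS (VN (Suc m)) = sS (VN m) + sS (VU m) + sS (VD m)" using sV by (simp add: VN_Suc)
  have el: "\<forall>I\<in>X. x \<notin> I \<and> finite I" if "X \<subseteq> V m" "x = (b, int m)" for X x b
    using that notin_V finI by blast
  have s1: "VN m \<union> VD m \<subseteq> V m" "VN m \<union> VU m \<subseteq> V m" using sp(1) by auto
  have e1: "\<forall>I\<in>VN m \<union> VD m. (True, int m) \<notin> I \<and> finite I" using el[OF s1(1) refl] .
  have e2: "\<forall>I\<in>VN m \<union> VU m. (False, int m) \<notin> I \<and> finite I" using el[OF s1(2) refl] .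
  show "card (VU (Suc m)) = card (VN m) + card (VD m)"
    unfolding VU_Suc using e1 f sp by (simp add: card_ins_img card_Un_disjoint)
  show "card (VD (Suc m)) = card (VN m) + card (VU m)"
    unfolding VD_Suc using e2 f sp by (simp add: card_ins_img card_Un_disjoint)
  have a1: "sS (insert (True, int m) ` (VN m \<union> VD m)) = sS (VN m \<union> VD m) + card (VN m \<union> VD m)"
    by (rule sS_ins_img) (use e1 f in auto)
  have a2: "sS (VN m \<union> VD m) = sS (VN m) + sS (VD m)"
    unfolding sS_def using f sp by (simp add: sum.union_disjoint)
  have a3: "card (VN m \<union> VD m) = card (VN m) + card (VD m)"
    using f sp by (simp add: card_Un_disjoint)
  show "sS (VU (Suc m)) = sS (VN m) + sS (VD m) + card (VN m) + card (VD m)"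
    unfolding VU_Suc a1 a2 a3 by simp
  have a1: "sS (insert (False, int m) ` (VN m \<union> VU m)) = sS (VN m \<union> VU m) + card (VN m \<union> VU m)"
    by (rule sS_ins_img) (use e2 f in auto)
  have a2: "sS (VN m \<union> VU m) = sS (VN m) + sS (VU m)"
    unfolding sS_def using f sp by (simp add: sum.union_disjoint)
  have a3: "card (VN m \<union> VU m) = card (VN m) + card (VU m)"
    using f sp by (simp add: card_Un_disjoint)
  show "sS (VD (Suc m)) = sS (VN m) + sS (VU m) + card (VN m) + card (VU m)"
    unfolding VD_Suc a1 a2 a3 by simp
qed

lemma idents:
  "card (VU m) = card (VD m) \<and> sS (VU m) = sS (VD m)
   \<and> 4 * (sS (VN m) + sS (VU m) + sS (VD m)) = 2 * m * (card (VN m) + card (VU m) + card (VD m)) + card (VU m) + card (VD m)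
   \<and> 2 * (sS (VN m) + sS (VD m)) = m * (card (VN m) + card (VD m)) \<and> card (VN m) \<ge> 1"
proof (induction m)
  case 0
  then show ?case by (simp add: VN0 VU0 VD0 sS_def)
next
  case (Suc m)
  then have h1: "card (VU m) = card (VD m)" and h2: "sS (VU m) = sS (VD m)"
    and h3: "4 * (sS (VN m) + sS (VU m) + sS (VD m)) = 2 * m * (card (VN m) + card (VU m) + card (VD m)) + card (VU m) + card (VD m)"
    and h4: "2 * (sS (VN m) + sS (VD m)) = m * (card (VN m) + card (VD m))" and h5: "card (VN m) \<ge> 1"
    by auto
  show ?case unfolding recs using h1 h2 h3 h4 h5
    by (simp add: algebra_simps)
qed



lemma bound_lim:
  fixes f :: "nat \<Rightarrow> real"
  assumes b: "\<And>m. \<bar>f (Suc m) - c\<bar> \<le> inverse (real (Suc m))"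
  shows "f \<longlonglongrightarrow> c"
proof (rule LIMSEQ_imp_Suc)
  show "(\<lambda>n. f (Suc n)) \<longlonglongrightarrow> c"
  proof (rule tendsto_sandwich)
    show "\<forall>\<^sub>F n in sequentially. c + - inverse (real (Suc n)) \<le> f (Suc n)"
      using b by (intro always_eventually allI) (smt (verit))
    show "\<forall>\<^sub>F n in sequentially. f (Suc n) \<le> c + inverse (real (Suc n))"
      using b by (intro always_eventually allI) (smt (verit))
    show "(\<lambda>n. c + - inverse (real (Suc n))) \<longlonglongrightarrow> c" by (rule LIMSEQ_inverse_real_of_nat_add_minus)
    show "(\<lambda>n. c + inverse (real (Suc n))) \<longlonglongrightarrow> c" by (rule LIMSEQ_inverse_real_of_nat_add)
  qed
qed

lemma ratio:
  fixes x y S :: real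
  assumes S: "S > 0" and d: "\<bar>5*x - y\<bar> \<le> 2*S" and l: "5*y \<ge> 2*(real m + 1)*S"
  shows "\<bar>x/y - 1/5\<bar> \<le> inverse (real (Suc m))"
proof -
  have w: "0 < 2*(real m + 1)*S" using S by simp
  then have y: "y > 0" using l by linarith
  have "x/y - 1/5 = (5*x - y)/(5*y)" using y by (simp add: field_simps)
  then have "\<bar>x/y - 1/5\<bar> = \<bar>5*x - y\<bar>/(5*y)" using y by simp
  also have "\<dots> \<le> (2*S)/(2*(real m + 1)*S)"
    by (rule frac_le) (use S d w l in auto)
  also have "\<dots> = inverse (real (Suc m))" using S w by (simp add: field_simps)
  finally show ?thesis .
qed

lemma sum_lin:
  "finite X \<Longrightarrow> (\<Sum>I\<in>X. (c::real) - k * real (card I)) = c * real (card X) - k * real (sS X)"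
  by (simp add: sum_subtractf sum_distrib_left[symmetric] sS_def)

lemma W_V: "W (UNIV \<times> {0..<int m}) = V m" by (simp add: V_def)

lemma W_P: "W (UNIV \<times> {0..<int m} - {(True, int m - 1)}) = VN m \<union> VD m"
proof -
  have "W (UNIV \<times> {0..<int m} - {(True, int m - 1)}) = {I \<in> V m. (True, int m - 1) \<notin> I}"
    by (auto simp: W_def V_def)
  also have "\<dots> = VN m \<union> VD m"
    using V_split[of m] by (auto simp: VN_def VU_def VD_def)
  finally show ?thesis .
qed

lemma finVP: "finite (VN m \<union> VD m)" using fin_parts by auto

lemma H_vals:
  "real (h_seq (Suc m)) = (4*real m + 2) * real (card (V m)) - 3 * real (sS (V m))"
  "real (phi_seq (Suc m)) = (4*real m + 2) * real (card (V m)) - 4 * real (sS (V m))"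
  "real (q_seq (Suc m)) = real (sS (V m))"
proof -
  note s = sums[OF finite_H LT_H, unfolded W_V card_H]
  show "real (h_seq (Suc m)) = (4*real m + 2) * real (card (V m)) - 3 * real (sS (V m))"
    unfolding h_seq_def s(1) sum_lin[OF finV] by simp
  show "real (phi_seq (Suc m)) = (4*real m + 2) * real (card (V m)) - 4 * real (sS (V m))"
    unfolding phi_seq_def s(2) sum_lin[OF finV] by simp
  show "real (q_seq (Suc m)) = real (sS (V m))"
    unfolding q_seq_def s(3) sS_def by simp
qed

lemma P_vals:
  "real (p_seq (Suc m)) = (4*real m + 1) * real (card (VN m \<union> VD m)) - 3 * real (sS (VN m \<union> VD m))"
  "real (theta_seq (Suc m)) = (4*real m + 1) * real (card (VN m \<union> VD m)) - 4 * real (sS (VN m \<union> VD m))"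
  "real (r_seq (Suc m)) = real (sS (VN m \<union> VD m))"
proof -
  note s = sums[OF finite_P LT_P, unfolded W_P card_P]
  show "real (p_seq (Suc m)) = (4*real m + 1) * real (card (VN m \<union> VD m)) - 3 * real (sS (VN m \<union> VD m))"
    unfolding p_seq_def s(1) sum_lin[OF finVP] by simp
  show "real (theta_seq (Suc m)) = (4*real m + 1) * real (card (VN m \<union> VD m)) - 4 * real (sS (VN m \<union> VD m))"
    unfolding theta_seq_def s(2) sum_lin[OF finVP] by simp
  show "real (r_seq (Suc m)) = real (sS (VN m \<union> VD m))"
    unfolding r_seq_def s(3) sS_def by simp
qed

lemma H_facts:
  "4 * real (sS (V m)) = 2 * real m * real (card (V m)) + real (card (VU m) + card (VD m))"
  "real (card (VU m) + card (VD m)) \<le> real (card (V m))"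
  "real (card (V m)) \<ge> 1"
proof -
  note sp = V_split[of m]
  note f = fin_parts[of m]
  have cV: "card (V m) = card (VN m) + card (VU m) + card (VD m)"
    unfolding sp(1) using f sp(2-4) by (simp add: card_Un_disjoint Int_Un_distrib2)
  have sV: "sS (V m) = sS (VN m) + sS (VU m) + sS (VD m)"
    unfolding sp(1) sS_def using f sp(2-4) by (simp add: sum.union_disjoint Int_Un_distrib2)
  have i: "4 * (sS (VN m) + sS (VU m) + sS (VD m)) = 2 * m * (card (VN m) + card (VU m) + card (VD m)) + card (VU m) + card (VD m)"
    "card (VN m) \<ge> 1" using idents[of m] by auto
  have "real (4 * sS (V m)) = real (2 * m * card (V m) + (card (VU m) + card (VD m)))"
    using i(1) unfolding sV cV by (simp add: algebra_simps)
  then show "4 * real (sS (V m)) = 2 * real m * real (card (V m)) + real (card (VU m) + card (VD m))"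
    by simp
  show "real (card (VU m) + card (VD m)) \<le> real (card (V m))" using cV by simp
  show "real (card (V m)) \<ge> 1" using cV i(2) by simp
qed

lemma P_facts:
  "2 * real (sS (VN m \<union> VD m)) = real m * real (card (VN m \<union> VD m))"
  "real (card (VN m \<union> VD m)) \<ge> 1"
proof -
  note sp = V_split[of m]
  note f = fin_parts[of m]
  have c: "card (VN m \<union> VD m) = card (VN m) + card (VD m)" using f sp by (simp add: card_Un_disjoint)
  have s: "sS (VN m \<union> VD m) = sS (VN m) + sS (VD m)" unfolding sS_def using f sp by (simp add: sum.union_disjoint)
  have i: "2 * (sS (VN m) + sS (VD m)) = m * (card (VN m) + card (VD m))" "card (VN m) \<ge> 1"
    using idents[of m] by auto
  have "real (2 * sS (VN m \<union> VD m)) = real (m * card (VN m \<union> VD m))" using i(1) unfolding c s by simp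
  then show "2 * real (sS (VN m \<union> VD m)) = real m * real (card (VN m \<union> VD m))" by simp
  show "real (card (VN m \<union> VD m)) \<ge> 1" using c i(2) by simp
qed

lemma limH:
  "(\<lambda>n. real (q_seq n) / real (h_seq n)) \<longlonglongrightarrow> 1/5"
  "(\<lambda>n. real (phi_seq n) / real (h_seq n)) \<longlonglongrightarrow> 4/5"
proof -
  have key: "\<bar>real (q_seq (Suc m)) / real (h_seq (Suc m)) - 1/5\<bar> \<le> inverse (real (Suc m))"
    and hpos: "real (h_seq (Suc m)) > 0" for m
  proof -
    define S0 where "S0 = real (card (V m))"
    define S1 where "S1 = real (sS (V m))"
    define b where "b = real (card (VU m) + card (VD m))"
    note hf = H_facts[of m, folded S0_def S1_def b_def]
    have b0: "b \<ge> 0" by (simp add: b_def)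
    have mS: "real m * S0 \<ge> 0" using hf(3) by simp
    have hv: "real (h_seq (Suc m)) = (4*real m + 2) * S0 - 3 * S1" using H_vals(1) S0_def S1_def by simp
    have qv: "real (q_seq (Suc m)) = S1" using H_vals(3) S1_def by simp
    have h1: "4*S1 = 2*(real m * S0) + b" using hf(1) by (simp add: mult.assoc)
    have e1: "5 * real (h_seq (Suc m)) - 2 * (real m + 1) * S0 = 18*(real m*S0) + 8*S0 - 15*S1"
      unfolding hv by (simp add: algebra_simps)
    have l: "5 * real (h_seq (Suc m)) \<ge> 2 * (real m + 1) * S0"
      using e1 h1 hf(2,3) mS b0 by linarith
    have e2: "2 * (real m + 1) * S0 = 2*(real m*S0) + 2*S0" by (simp add: algebra_simps)
    show "real (h_seq (Suc m)) > 0" using l e2 hf(3) mS by linarith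
    show "\<bar>real (q_seq (Suc m)) / real (h_seq (Suc m)) - 1/5\<bar> \<le> inverse (real (Suc m))"
    proof (rule ratio)
      show "S0 > 0" using hf(3) by simp
      have "5 * real (q_seq (Suc m)) - real (h_seq (Suc m)) = 8*S1 - 4*(real m*S0) - 2*S0"
        unfolding hv qv by (simp add: algebra_simps)
      then show "\<bar>5 * real (q_seq (Suc m)) - real (h_seq (Suc m))\<bar> \<le> 2 * S0"
        using h1 hf(2) b0 by linarith
      show "5 * real (h_seq (Suc m)) \<ge> 2 * (real m + 1) * S0" by (rule l)
    qed
  qed
  show "(\<lambda>n. real (q_seq n) / real (h_seq n)) \<longlonglongrightarrow> 1/5" by (rule bound_lim) (rule key)
  show "(\<lambda>n. real (phi_seq n) / real (h_seq n)) \<longlonglongrightarrow> 4/5"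
  proof (rule bound_lim)
    fix m
    have e: "real (phi_seq (Suc m)) = real (h_seq (Suc m)) - real (q_seq (Suc m))"
      using H_vals[of m] by simp
    have "real (phi_seq (Suc m)) / real (h_seq (Suc m)) - 4/5 = - (real (q_seq (Suc m)) / real (h_seq (Suc m)) - 1/5)"
      unfolding e using hpos[of m] by (simp add: field_simps)
    then show "\<bar>real (phi_seq (Suc m)) / real (h_seq (Suc m)) - 4/5\<bar> \<le> inverse (real (Suc m))"
      using key[of m] by simp
  qed
qed

lemma limP:
  "(\<lambda>n. real (r_seq n) / real (p_seq n)) \<longlonglongrightarrow> 1/5"
  "(\<lambda>n. real (theta_seq n) / real (p_seq n)) \<longlonglongrightarrow> 4/5"
proof -
  have key: "\<bar>real (r_seq (Suc m)) / real (p_seq (Suc m)) - 1/5\<bar> \<le> inverse (real (Suc m))"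
    and ppos: "real (p_seq (Suc m)) > 0" for m
  proof -
    define S0 where "S0 = real (card (VN m \<union> VD m))"
    define S1 where "S1 = real (sS (VN m \<union> VD m))"
    note hf = P_facts[of m, folded S0_def S1_def]
    have mS: "real m * S0 \<ge> 0" using hf(2) by simp
    have hv: "real (p_seq (Suc m)) = (4*real m + 1) * S0 - 3 * S1" using P_vals(1) S0_def S1_def by simp
    have qv: "real (r_seq (Suc m)) = S1" using P_vals(3) S1_def by simp
    have h1: "2*S1 = real m * S0" using hf(1) by simp
    have e1: "5 * real (p_seq (Suc m)) - 2 * (real m + 1) * S0 = 18*(real m*S0) + 3*S0 - 15*S1"
      unfolding hv by (simp add: algebra_simps)
    have l: "5 * real (p_seq (Suc m)) \<ge> 2 * (real m + 1) * S0"
      using e1 h1 hf(2) mS by linarith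
    have e2: "2 * (real m + 1) * S0 = 2*(real m*S0) + 2*S0" by (simp add: algebra_simps)
    show "real (p_seq (Suc m)) > 0" using l e2 hf(2) mS by linarith
    show "\<bar>real (r_seq (Suc m)) / real (p_seq (Suc m)) - 1/5\<bar> \<le> inverse (real (Suc m))"
    proof (rule ratio)
      show "S0 > 0" using hf(2) by simp
      show "\<bar>5 * real (r_seq (Suc m)) - real (p_seq (Suc m))\<bar> \<le> 2 * S0"
        using h1 hf(2) unfolding hv qv by (simp add: algebra_simps)
      show "5 * real (p_seq (Suc m)) \<ge> 2 * (real m + 1) * S0" by (rule l)
    qed
  qed
  show "(\<lambda>n. real (r_seq n) / real (p_seq n)) \<longlonglongrightarrow> 1/5" by (rule bound_lim) (rule key)
  show "(\<lambda>n. real (theta_seq n) / real (p_seq n)) \<longlonglongrightarrow> 4/5"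
  proof (rule bound_lim)
    fix m
    have e: "real (theta_seq (Suc m)) = real (p_seq (Suc m)) - real (r_seq (Suc m))"
      using P_vals[of m] by simp
    have "real (theta_seq (Suc m)) / real (p_seq (Suc m)) - 4/5 = - (real (r_seq (Suc m)) / real (p_seq (Suc m)) - 1/5)"
      unfolding e using ppos[of m] by (simp add: field_simps)
    then show "\<bar>real (theta_seq (Suc m)) / real (p_seq (Suc m)) - 4/5\<bar> \<le> inverse (real (Suc m))"
      using key[of m] by simp
  qed
qed

theorem theorem7:
  shows "(\<lambda>n. real (phi_seq n) / real (h_seq n)) \<longlonglongrightarrow> 4/5
    \<and> (\<lambda>n. real (theta_seq n) / real (p_seq n)) \<longlonglongrightarrow> 4/5
    \<and> (\<lambda>n. real (q_seq n) / real (h_seq n)) \<longlonglongrightarrow> 1/5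
    \<and> (\<lambda>n. real (r_seq n) / real (p_seq n)) \<longlonglongrightarrow> 1/5"
  using limH limP by blast


end
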